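(* Let $S$ be an inverse semigroup, regarded as an algebraic structure in the language $\mathcal{L}=\{\cdot,{}^{-1}\}\cup\{s\mid s\in S\}$, and let $E=\{e\in S\mid ee=e\}$ be its set of idempotents. Suppose $E$ is linearly ordered by the natural order on idempotents and $|E|>1$. Then $S$ is not an equational domain in the language $\mathcal{L}$.
   Context: A semigroup $S$ is inverse if for every $s\in S$ there is a unique $s^{-1}\in S$ with $ss^{-1}s=s$ and $s^{-1}ss^{-1}=s^{-1}$; its idempotents commute. The natural order on idempotents is $e\le f \iff ef=e$. The language $\mathcal{L}$ consists of multiplication, inversion, and a constant symbol for every element of $S$. For variables $x_1,\dots,x_n$, a term of $\mathcal{L}$ is a finite product of variables raised to integer powers and constants from $S$. An equation is an equality of two terms; a system of equations is an arbitrary set of equations in $x_1,\dots,x_n$. A set $Y\subseteq S^n$ is algebraic over $S$ if it is the set of all tuples in $S^n$ satisfying all equations of some system. $S$ is an equational domain (in $\mathcal{L}$) if for every $n$, every finite union of algebraic subsets of $S^n$ is algebraic. *)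

theory Defs
  imports Main
begin

definition inverse_semigroup :: "'a::semigroup_mult itself \<Rightarrow> bool" where
  "inverse_semigroup _ \<longleftrightarrow> (\<forall>s::'a. \<exists>!t. s * t * s = s \<and> t * s * t = t)"

definition sinv :: "'a::semigroup_mult \<Rightarrow> 'a" where
  "sinv s = (THE t. s * t * s = s \<and> t * s * t = t)"

definition idempotents :: "'a::semigroup_mult set" where
  "idempotents = {e. e * e = e}"

definition nat_le_idem :: "'a::semigroup_mult \<Rightarrow> 'a \<Rightarrow> bool" where
  "nat_le_idem e f \<longleftrightarrow> e * f = e"

datatype 'a trm = Var nat | Const 'a | Mul "'a trm" "'a trm" | Inv "'a trm"

fun eval :: "'a::semigroup_mult list \<Rightarrow> 'a trm \<Rightarrow> 'a" where
  "eval p (Var i) = p ! i"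
| "eval p (Const c) = c"
| "eval p (Mul t u) = eval p t * eval p u"
| "eval p (Inv t) = sinv (eval p t)"

fun vars :: "'a trm \<Rightarrow> nat set" where
  "vars (Var i) = {i}"
| "vars (Const c) = {}"
| "vars (Mul t u) = vars t \<union> vars u"
| "vars (Inv t) = vars t"

text \<open>Points of S^n are lists of length n; a system of equations in x_0..x_{n-1}
  is an arbitrary set of pairs of terms in these variables.\<close>
definition algebraic :: "nat \<Rightarrow> 'a::semigroup_mult list set \<Rightarrow> bool" where
  "algebraic n Y \<longleftrightarrow> (\<exists>Sys :: ('a trm \<times> 'a trm) set.
      (\<forall>(t, u)\<in>Sys. vars t \<union> vars u \<subseteq> {..<n}) \<and>
      Y = {p. length p = n \<and> (\<forall>(t, u)\<in>Sys. eval p t = eval p u)})"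

definition equational_domain :: "'a::semigroup_mult itself \<Rightarrow> bool" where
  "equational_domain _ \<longleftrightarrow> (\<forall>n. \<forall>\<Y> :: 'a list set set.
      finite \<Y> \<and> \<Y> \<noteq> {} \<and> (\<forall>Y\<in>\<Y>. algebraic n Y) \<longrightarrow> algebraic n (\<Union>\<Y>))"

end

theory Submission
  imports Defs
begin

lemma sinv_prop:
  assumes I: "inverse_semigroup TYPE('a::semigroup_mult)"
  shows "(s::'a) * sinv s * s = s \<and> sinv s * s * sinv s = sinv s"
proof -
  have "\<exists>!t. s * t * s = s \<and> t * s * t = t" using I unfolding inverse_semigroup_def by blast
  then show ?thesis unfolding sinv_def by (rule theI')
qed

lemma sinv_uniq:
  assumes I: "inverse_semigroup TYPE('a::semigroup_mult)"
    and "(s::'a) * t * s = s" and "t * s * t = t"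
  shows "sinv s = t"
proof -
  have "\<exists>!t. s * t * s = s \<and> t * s * t = t" using I unfolding inverse_semigroup_def by blast
  then show ?thesis unfolding sinv_def using assms(2,3) by (simp add: the1_equality)
qed

lemma idem_mult:
  assumes I: "inverse_semigroup TYPE('a::semigroup_mult)"
    and e: "(e::'a) * e = e" and f: "f * f = f"
  shows "e * f * (e * f) = e * f"
proof -
  define x where "x = sinv (e * f)"
  have x1: "e * f * x * (e * f) = e * f" and x2: "x * (e * f) * x = x"
    using sinv_prop[OF I, of "e*f"] unfolding x_def by auto
  have y1: "e * f * (f * x * e) * (e * f) = e * f"
  proof -
    have "e * f * (f * x * e) * (e * f) = e * (f * f) * x * (e * e) * f" by (simp add: mult.assoc)
    also have "\<dots> = e * f * x * (e * f)" using e f by (simp add: mult.assoc)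
    finally show ?thesis using x1 by simp
  qed
  have y2: "(f * x * e) * (e * f) * (f * x * e) = f * x * e"
  proof -
    have "(f * x * e) * (e * f) * (f * x * e) = f * (x * (e * e) * (f * f) * x) * e" by (simp add: mult.assoc)
    also have "\<dots> = f * (x * (e * f) * x) * e" using e f by (simp add: mult.assoc)
    finally show ?thesis using x2 by simp
  qed
  have xy: "x = f * x * e" using sinv_uniq[OF I y1 y2] unfolding x_def .
  have xx: "x * x = x"
  proof -
    have "x * x = f * (x * (e * f) * x) * e" using xy by (metis mult.assoc)
    also have "\<dots> = x" using x2 xy by simp
    finally show ?thesis .
  qed
  have "sinv x = x" using sinv_uniq[OF I, of x x] xx by simp
  moreover have "sinv x = e * f" using sinv_uniq[OF I x2 x1] .
  ultimately have "e * f = x" by simp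
  then show ?thesis using xx by simp
qed

lemma idem_comm:
  assumes I: "inverse_semigroup TYPE('a::semigroup_mult)"
    and e: "(e::'a) * e = e" and f: "f * f = f"
  shows "e * f = f * e"
proof -
  have ef: "e * f * (e * f) = e * f" using idem_mult[OF I e f] .
  have fe: "f * e * (f * e) = f * e" using idem_mult[OF I f e] .
  have 1: "e * f * (f * e) * (e * f) = e * f"
  proof -
    have "e * f * (f * e) * (e * f) = e * (f * f) * (e * e) * f" by (simp add: mult.assoc)
    also have "\<dots> = e * f * (e * f)" using e f by (simp add: mult.assoc)
    finally show ?thesis using ef by simp
  qed
  have 2: "f * e * (e * f) * (f * e) = f * e"
  proof -
    have "f * e * (e * f) * (f * e) = f * (e * e) * (f * f) * e" by (simp add: mult.assoc)
    also have "\<dots> = f * e * (f * e)" using e f by (simp add: mult.assoc)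
    finally show ?thesis using fe by simp
  qed
  have "sinv (e * f) = f * e" using sinv_uniq[OF I 1 2] .
  moreover have "sinv (e * f) = e * f" using sinv_uniq[OF I, of "e*f" "e*f"] ef by (metis mult.assoc)
  ultimately show ?thesis by simp
qed


context
  assumes I: "inverse_semigroup TYPE('a::semigroup_mult)"
begin

lemma P1: "(s::'a) * sinv s * s = s" using sinv_prop[OF I] by blast
lemma P2: "sinv (s::'a) * s * sinv s = sinv s" using sinv_prop[OF I] by blast

lemma P1': "(s::'a) * (sinv s * s) = s" using P1 by (simp add: mult.assoc)
lemma P2': "sinv (s::'a) * (s * sinv s) = sinv s" using P2 by (simp add: mult.assoc)

lemma d_idem: "(s::'a) * sinv s * (s * sinv s) = s * sinv s"
  by (metis P1 mult.assoc)
lemma r_idem: "sinv (s::'a) * s * (sinv s * s) = sinv s * s"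
  by (metis P2 mult.assoc)

lemma sinv_sinv: "sinv (sinv (s::'a)) = s"
  using sinv_uniq[OF I, of "sinv s" s] P1 P2 by blast

lemma sinv_idem: "(e::'a) * e = e \<Longrightarrow> sinv e = e"
  using sinv_uniq[OF I, of e e] by simp

lemma comm: "(e::'a) * e = e \<Longrightarrow> f * f = f \<Longrightarrow> e * f = f * e"
  using idem_comm[OF I] by blast

lemma sinv_mult: "sinv ((x::'a) * y) = sinv y * sinv x"
proof (rule sinv_uniq[OF I])
  have c: "y * sinv y * (sinv x * x) = sinv x * x * (y * sinv y)"
    using comm d_idem r_idem by blast
  have "x * y * (sinv y * sinv x) * (x * y) = x * (y * sinv y * (sinv x * x)) * y"
    by (simp add: mult.assoc)
  also have "\<dots> = x * (sinv x * x * (y * sinv y)) * y" using c by simp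
  also have "\<dots> = (x * sinv x * x) * (y * sinv y * y)" by (simp add: mult.assoc)
  finally show "x * y * (sinv y * sinv x) * (x * y) = x * y" using P1 by simp
  have "sinv y * sinv x * (x * y) * (sinv y * sinv x) = sinv y * (sinv x * x * (y * sinv y)) * sinv x"
    by (simp add: mult.assoc)
  also have "\<dots> = sinv y * (y * sinv y * (sinv x * x)) * sinv x" using c by simp
  also have "\<dots> = (sinv y * y * sinv y) * (sinv x * x * sinv x)" by (simp add: mult.assoc)
  finally show "sinv y * sinv x * (x * y) * (sinv y * sinv x) = sinv y * sinv x" using P2 by simp
qed

definition "INV a b c \<longleftrightarrow> c = b * sinv b * a \<and> c = a * sinv a * b \<and> c = a * (sinv b * b) \<and> c = b * (sinv a * a)"

lemma stepL:
  fixes a1 b1 c1 a2 b2 c2 :: 'a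
  assumes h1: "c1 = b1 * sinv b1 * a1" and h2: "c1 = b1 * (sinv a1 * a1)"
    and h3: "c2 = b2 * sinv b2 * a2"
  shows "c1 * c2 = (b1 * b2) * sinv (b1 * b2) * (a1 * a2)"
proof -
  have k: "sinv b1 * a1 = sinv b1 * b1 * (sinv a1 * a1)"
  proof -
    have "sinv b1 * a1 = sinv b1 * (b1 * sinv b1 * a1)" using P2 by (metis mult.assoc)
    also have "\<dots> = sinv b1 * b1 * (sinv a1 * a1)" using h1 h2 by (simp add: mult.assoc)
    finally show ?thesis .
  qed
  have i1: "sinv b1 * b1 * (sinv a1 * a1) * (sinv b1 * b1 * (sinv a1 * a1)) = sinv b1 * b1 * (sinv a1 * a1)"
    using idem_mult[OF I] r_idem by blast
  have cm: "b2 * sinv b2 * (sinv b1 * b1 * (sinv a1 * a1)) = sinv b1 * b1 * (sinv a1 * a1) * (b2 * sinv b2)"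
    using comm[OF d_idem i1] .
  have "(b1 * b2) * sinv (b1 * b2) * (a1 * a2) = b1 * (b2 * sinv b2) * (sinv b1 * a1) * a2"
    by (simp add: sinv_mult mult.assoc)
  also have "\<dots> = b1 * (b2 * sinv b2 * (sinv b1 * b1 * (sinv a1 * a1))) * a2" using k by (simp add: mult.assoc)
  also have "\<dots> = b1 * (sinv b1 * b1 * (sinv a1 * a1) * (b2 * sinv b2)) * a2" using cm by simp
  also have "\<dots> = (b1 * sinv b1 * b1) * (sinv a1 * a1) * (b2 * sinv b2 * a2)" by (simp add: mult.assoc)
  also have "\<dots> = c1 * c2" using P1 h2 h3 by (simp add: mult.assoc)
  finally show ?thesis by simp
qed

lemma INV_sinv: "INV a b (c::'a) \<Longrightarrow> INV (sinv a) (sinv b) (sinv c)"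
proof -
  assume h: "INV a b c"
  have e1: "sinv (x * sinv x * y) = sinv y * (sinv (sinv x) * sinv x)" for x y :: 'a
    by (simp add: sinv_mult sinv_idem[OF d_idem] sinv_sinv)
  have e2: "sinv (y * (sinv x * x)) = sinv x * sinv (sinv x) * sinv y" for x y :: 'a
    by (simp add: sinv_mult sinv_idem[OF r_idem] sinv_sinv mult.assoc)
  from h show ?thesis unfolding INV_def using e1 e2 by metis
qed

lemma INV_mult:
  assumes "INV a1 b1 (c1::'a)" "INV a2 b2 c2"
  shows "INV (a1 * a2) (b1 * b2) (c1 * c2)"
proof -
  have A: "c1 * c2 = (b1 * b2) * sinv (b1 * b2) * (a1 * a2)"
    using assms stepL unfolding INV_def by blast
  have B: "c1 * c2 = (a1 * a2) * sinv (a1 * a2) * (b1 * b2)"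
    using assms stepL unfolding INV_def by blast
  have s1: "INV (sinv a1) (sinv b1) (sinv c1)" "INV (sinv a2) (sinv b2) (sinv c2)"
    using assms INV_sinv by auto
  have C: "sinv c2 * sinv c1 = (sinv b2 * sinv b1) * sinv (sinv b2 * sinv b1) * (sinv a2 * sinv a1)"
    using s1 stepL unfolding INV_def by blast
  have D: "sinv c2 * sinv c1 = (sinv a2 * sinv a1) * sinv (sinv a2 * sinv a1) * (sinv b2 * sinv b1)"
    using s1 stepL unfolding INV_def by blast
  have C': "c1 * c2 = (a1 * a2) * (sinv (b1 * b2) * (b1 * b2))"
  proof -
    have "c1 * c2 = sinv (sinv c2 * sinv c1)" by (simp add: sinv_mult sinv_sinv)
    also have "\<dots> = sinv ((sinv (b1 * b2)) * sinv (sinv (b1 * b2)) * sinv (a1 * a2))"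
      using C by (simp add: sinv_mult)
    also have "\<dots> = (a1 * a2) * (sinv (b1 * b2) * (b1 * b2))"
      by (simp add: sinv_mult sinv_sinv sinv_idem r_idem mult.assoc)
    finally show ?thesis .
  qed
  have D': "c1 * c2 = (b1 * b2) * (sinv (a1 * a2) * (a1 * a2))"
  proof -
    have "c1 * c2 = sinv (sinv c2 * sinv c1)" by (simp add: sinv_mult sinv_sinv)
    also have "\<dots> = sinv ((sinv (a1 * a2)) * sinv (sinv (a1 * a2)) * sinv (b1 * b2))"
      using D by (simp add: sinv_mult)
    also have "\<dots> = (b1 * b2) * (sinv (a1 * a2) * (a1 * a2))"
      by (simp add: sinv_mult sinv_sinv sinv_idem r_idem mult.assoc)
    finally show ?thesis .
  qed
  show ?thesis unfolding INV_def using A B C' D' by blast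
qed


lemma INV_same: "INV (u::'a) u u"
  unfolding INV_def using P1 P1' by simp

lemma INV_eval:
  fixes e f :: 'a
  assumes e: "e * e = e" and f: "f * f = f" and ef: "e * f = e" and fe: "f * e = e"
  shows "INV (eval [f, e] t) (eval [e, f] t) (eval [e, e] t)"
proof (induction t)
  case (Var i)
  show ?case
  proof (cases i)
    case 0
    then show ?thesis unfolding INV_def using e f ef fe sinv_idem[OF e] sinv_idem[OF f]
      by (simp add: mult.assoc)
  next
    case (Suc j)
    show ?thesis
    proof (cases j)
      case 0
      then show ?thesis unfolding INV_def using Suc e f ef fe sinv_idem[OF e] sinv_idem[OF f]
        by (simp add: mult.assoc)
    next
      case (Suc k)
      then show ?thesis using \<open>i = Suc j\<close> INV_same by simp
    qed
  qed
next
  case (Const x)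
  then show ?case using INV_same by simp
next
  case (Mul t1 t2)
  then show ?case using INV_mult by simp
next
  case (Inv t)
  then show ?case using INV_sinv by simp
qed

lemma alg_point: "algebraic 2 {[a::'a, b]}"
  unfolding algebraic_def
proof (intro exI conjI)
  show "\<forall>(t, u)\<in>{(Var 0, Const a), (Var 1, Const b)}. vars t \<union> vars u \<subseteq> {..<2}" by auto
  show "{[a, b]} = {p. length p = 2 \<and> (\<forall>(t, u)\<in>{(Var 0, Const a), (Var 1, Const b)}. eval p t = eval p u)}"
  proof (intro set_eqI iffI)
    fix p :: "'a list" assume "p \<in> {p. length p = 2 \<and> (\<forall>(t, u)\<in>{(Var 0, Const a), (Var 1, Const b)}. eval p t = eval p u)}"
    then have "length p = 2" "p ! 0 = a" "p ! 1 = b" by auto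
    then show "p \<in> {[a, b]}"
      by (cases p; cases "tl p"; auto)
  qed auto
qed

lemma main:
  fixes e f :: 'a
  assumes e: "e * e = e" and f: "f * f = f" and ef: "e * f = e" and fe: "f * e = e" and ne: "e \<noteq> f"
  shows "\<not> equational_domain TYPE('a)"
proof
  assume ED: "equational_domain TYPE('a)"
  let ?Y = "{{[f, e]}, {[e, f]}} :: 'a list set set"
  have "finite ?Y \<and> ?Y \<noteq> {} \<and> (\<forall>Y\<in>?Y. algebraic 2 Y)" using alg_point by auto
  then have "algebraic 2 (\<Union>?Y)"
    using ED unfolding equational_domain_def by blast
  then obtain Sys :: "('a trm \<times> 'a trm) set" where
    S: "\<Union>?Y = {p. length p = 2 \<and> (\<forall>(t, u)\<in>Sys. eval p t = eval p u)}"
    unfolding algebraic_def by blast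
  have "[e, e] \<in> \<Union>?Y"
    unfolding S
  proof (safe)
    fix t u assume tu: "(t, u) \<in> Sys"
    have "[f, e] \<in> \<Union>?Y" "[e, f] \<in> \<Union>?Y" by auto
    then have h: "eval [f, e] t = eval [f, e] u" "eval [e, f] t = eval [e, f] u"
      unfolding S using tu by auto
    have "eval [e, e] t = eval [e, f] t * sinv (eval [e, f] t) * eval [f, e] t"
      using INV_eval[OF e f ef fe, of t] unfolding INV_def by blast
    moreover have "eval [e, e] u = eval [e, f] u * sinv (eval [e, f] u) * eval [f, e] u"
      using INV_eval[OF e f ef fe, of u] unfolding INV_def by blast
    ultimately show "eval [e, e] t = eval [e, e] u" using h by simp
  qed simp
  then show False using ne by auto
qed

end

theorem lemma4:
  assumes "inverse_semigroup TYPE('a::semigroup_mult)"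
    and "\<forall>e\<in>(idempotents :: 'a set). \<forall>f\<in>idempotents. nat_le_idem e f \<or> nat_le_idem f e"
    and "\<exists>e\<in>(idempotents :: 'a set). \<exists>f\<in>idempotents. e \<noteq> f"
  shows "\<not> equational_domain TYPE('a)"
proof -
  obtain e f :: 'a where e: "e * e = e" and f: "f * f = f" and ne: "e \<noteq> f"
    and le: "e * f = e \<or> f * e = f"
    using assms(2,3) unfolding idempotents_def nat_le_idem_def by blast
  have c: "e * f = f * e" using idem_comm[OF assms(1) e f] .
  show ?thesis
  proof (cases "e * f = e")
    case True
    then show ?thesis using main[OF assms(1) e f True] c ne by simp
  next
    case False
    then have "f * e = f" using le by simp
    then show ?thesis using main[OF assms(1) f e] c ne by simp
  qed
qed

end
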